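(* The variety $\mathsf{V}(S_{(4,390)})$ is the ai-semiring variety defined by the identities $x^2y\approx xy$; $xyz\approx yxz$; $x^2y^2\approx (xy)^2$; $x^2y^2\approx y^2x^2$; $xyz\approx xyz+y$, $xy\approx xy+y$, $yz\approx yz+y$; $x^2+yz\approx x^2yz$; $x_1x_2^2+x_3x_4^2\approx x_1x_2x_3x_4^2$; and $x_1x_2+x_3x_4\approx x_1x_2+x_3x_4+x_1x_3^2$.
   Context: An ai-semiring is an algebra $(S,+,\cdot)$ with $(S,+)$ a semilattice, $(S,\cdot)$ a semigroup, and both distributive laws. $\mathsf{V}(S)$ is the variety generated by $S$; "the ai-semiring variety defined by identities $\Sigma$" is the class of all ai-semirings satisfying $\Sigma$. $S_{(4,390)}$ has carrier $\{1,2,3,4\}$; addition: $x+x=x$, $2+x=x$, $1+x=1$ for all $x$, $3+4=1$; multiplication (row $a$, column $b$ gives $a\cdot b$): row $1$: $1,1,1,1$; row $2$: $1,2,1,4$; row $3$: $1,1,1,1$; row $4$: $1,1,1,1$. *)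

theory Defs
  imports Main
begin

datatype trm = V nat | Pl trm trm | Ml trm trm

fun eval :: "('a \<Rightarrow> 'a \<Rightarrow> 'a) \<Rightarrow> ('a \<Rightarrow> 'a \<Rightarrow> 'a) \<Rightarrow> (nat \<Rightarrow> 'a) \<Rightarrow> trm \<Rightarrow> 'a" where
  "eval ad mu \<rho> (V i) = \<rho> i"
| "eval ad mu \<rho> (Pl s t) = ad (eval ad mu \<rho> s) (eval ad mu \<rho> t)"
| "eval ad mu \<rho> (Ml s t) = mu (eval ad mu \<rho> s) (eval ad mu \<rho> t)"

definition ai_semiring :: "'a set \<Rightarrow> ('a \<Rightarrow> 'a \<Rightarrow> 'a) \<Rightarrow> ('a \<Rightarrow> 'a \<Rightarrow> 'a) \<Rightarrow> bool" where
  "ai_semiring A ad mu \<longleftrightarrow>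
     (\<forall>x\<in>A. \<forall>y\<in>A. ad x y \<in> A \<and> mu x y \<in> A) \<and>
     (\<forall>x\<in>A. \<forall>y\<in>A. \<forall>z\<in>A. ad (ad x y) z = ad x (ad y z)) \<and>
     (\<forall>x\<in>A. \<forall>y\<in>A. ad x y = ad y x) \<and>
     (\<forall>x\<in>A. ad x x = x) \<and>
     (\<forall>x\<in>A. \<forall>y\<in>A. \<forall>z\<in>A. mu (mu x y) z = mu x (mu y z)) \<and>
     (\<forall>x\<in>A. \<forall>y\<in>A. \<forall>z\<in>A. mu x (ad y z) = ad (mu x y) (mu x z)) \<and>
     (\<forall>x\<in>A. \<forall>y\<in>A. \<forall>z\<in>A. mu (ad y z) x = ad (mu y x) (mu z x))"

definition sat :: "'a set \<Rightarrow> ('a \<Rightarrow> 'a \<Rightarrow> 'a) \<Rightarrow> ('a \<Rightarrow> 'a \<Rightarrow> 'a) \<Rightarrow> trm \<times> trm \<Rightarrow> bool" where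
  "sat A ad mu e \<longleftrightarrow> (\<forall>\<rho>. (\<forall>i. \<rho> i \<in> A) \<longrightarrow> eval ad mu \<rho> (fst e) = eval ad mu \<rho> (snd e))"

definition S390 :: "nat set" where "S390 = {1,2,3,4}"

definition add390 :: "nat \<Rightarrow> nat \<Rightarrow> nat" where
  "add390 a b = (if a = b then a else if a = 2 then b else if b = 2 then a else 1)"

definition mul390 :: "nat \<Rightarrow> nat \<Rightarrow> nat" where
  "mul390 a b = (if a = 2 \<and> b = 2 then 2 else if a = 2 \<and> b = 4 then 4 else 1)"

abbreviation "vx \<equiv> V 0"
abbreviation "vy \<equiv> V 1"
abbreviation "vz \<equiv> V 2"
abbreviation "x1 \<equiv> V 0"
abbreviation "x2 \<equiv> V 1"
abbreviation "x3 \<equiv> V 2"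
abbreviation "x4 \<equiv> V 3"
abbreviation sq :: "trm \<Rightarrow> trm" where "sq t \<equiv> Ml t t"

definition Sigma390 :: "(trm \<times> trm) set" where
  "Sigma390 = {
    (Ml (sq vx) vy, Ml vx vy),
    (Ml (Ml vx vy) vz, Ml (Ml vy vx) vz),
    (Ml (sq vx) (sq vy), sq (Ml vx vy)),
    (Ml (sq vx) (sq vy), Ml (sq vy) (sq vx)),
    (Ml (Ml vx vy) vz, Pl (Ml (Ml vx vy) vz) vy),
    (Ml vx vy, Pl (Ml vx vy) vy),
    (Ml vy vz, Pl (Ml vy vz) vy),
    (Pl (sq vx) (Ml vy vz), Ml (Ml (sq vx) vy) vz),
    (Pl (Ml x1 (sq x2)) (Ml x3 (sq x4)), Ml (Ml (Ml x1 x2) x3) (sq x4)),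
    (Pl (Ml x1 x2) (Ml x3 x4), Pl (Pl (Ml x1 x2) (Ml x3 x4)) (Ml x1 (sq x3)))
  }"

end

theory Submission
  imports Defs
begin

fun vs :: "trm \<Rightarrow> nat set" where
  "vs (V i) = {i}" | "vs (Pl a b) = vs a \<union> vs b" | "vs (Ml a b) = vs a \<union> vs b"
fun lg :: "trm \<Rightarrow> nat set" where
  "lg (V i) = {}" | "lg (Pl a b) = lg a \<union> lg b" | "lg (Ml a b) = vs a \<union> vs b"
fun bd :: "trm \<Rightarrow> nat set" where
  "bd (V i) = {}" | "bd (Pl a b) = bd a \<union> bd b" | "bd (Ml a b) = vs a \<union> bd b"
fun lst :: "trm \<Rightarrow> nat set" where
  "lst (V i) = {i}" | "lst (Pl a b) = lst a \<union> lst b" | "lst (Ml a b) = lst b"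
fun lin :: "trm \<Rightarrow> nat set" where
  "lin (V i) = {i}" | "lin (Pl a b) = lin a \<union> lin b" | "lin (Ml a b) = {}"
fun ll :: "trm \<Rightarrow> nat set" where
  "ll (V i) = {}" | "ll (Pl a b) = ll a \<union> ll b" | "ll (Ml a b) = lst b"
fun msr :: "trm \<Rightarrow> nat" where
  "msr (V i) = 1" | "msr (Pl a b) = msr a + msr b + 1" | "msr (Ml a b) = 2 * msr a + msr b"

lemma fin_vs: "finite (vs t)" by (induct t) auto
lemma fin_bd: "finite (bd t)" by (induct t) (auto simp: fin_vs)
lemma vs_ne: "vs t \<noteq> {}" by (induct t) auto
lemma vs_eq: "vs t = bd t \<union> lst t" by (induct t) auto
lemma lin_sub: "lin t \<subseteq> lst t" by (induct t) auto
lemma ll_sub: "ll t \<subseteq> lst t" by (induct t) auto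
lemma ll_bd: "ll t \<noteq> {} \<Longrightarrow> bd t \<noteq> {}" by (induct t) (auto simp: vs_ne)
lemma lst_vs: "lst t \<subseteq> vs t" using vs_eq by blast
lemma bd_vs: "bd t \<subseteq> vs t" using vs_eq by blast
lemma lin_vs: "lin t \<subseteq> vs t" using lin_sub lst_vs by blast
lemma ll_lg: "ll t \<subseteq> lg t" by (induct t) (use lst_vs in auto)
lemma lg_sub: "lg t \<subseteq> bd t \<union> ll t" by (induct t) (use vs_eq in auto)
lemma lg_vs: "lg t \<subseteq> vs t" by (induct t) auto
lemma msr_pos: "msr t \<ge> 1" by (induct t) auto

lemma trm_ind:
  assumes "\<And>i. P (V i)" "\<And>a b. P a \<Longrightarrow> P b \<Longrightarrow> P (Pl a b)"
    "\<And>i t. P t \<Longrightarrow> P (Ml (V i) t)"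
    "\<And>a b t. P (Ml a t) \<Longrightarrow> P (Ml b t) \<Longrightarrow> P (Ml (Pl a b) t)"
    "\<And>a b t. P (Ml a (Ml b t)) \<Longrightarrow> P (Ml (Ml a b) t)"
  shows "P t"
proof (induction t rule: measure_induct_rule[where f=msr])
  case (less t)
  show ?case
  proof (cases t)
    case (V i) then show ?thesis using assms(1) by simp
  next
    case (Pl a b) then show ?thesis using less assms(2) by simp
  next
    case (Ml a b)
    show ?thesis
    proof (cases a)
      case (V i) then show ?thesis using Ml less[of b] assms(3) by simp
    next
      case (Pl a1 a2) then show ?thesis using Ml less[of "Ml a1 b"] less[of "Ml a2 b"] assms(4) by simp
    next
      case (Ml a1 a2) then show ?thesis using \<open>t = Ml a b\<close> less[of "Ml a1 (Ml a2 b)"] assms(5) msr_pos[of a1] by simp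
    qed
  qed
qed

lemma eval_cong: "(\<And>i. i \<in> vs t \<Longrightarrow> \<rho> i = \<sigma> i) \<Longrightarrow> eval f g \<rho> t = eval f g \<sigma> t"
  by (induct t) auto

definition asg :: "'b \<Rightarrow> 'b \<Rightarrow> 'b \<Rightarrow> 'b \<Rightarrow> nat \<Rightarrow> 'b" where
  "asg a b c d i = (if i = 0 then a else if i = 1 then b else if i = 2 then c else d)"

lemma Sigma_vs: "e \<in> Sigma390 \<Longrightarrow> vs (fst e) \<subseteq> {0,1,2,3} \<and> vs (snd e) \<subseteq> {0,1,2,3}"
  unfolding Sigma390_def by auto

lemma asg_agree: "i \<in> {0,1,2,3} \<Longrightarrow> asg (\<rho> 0) (\<rho> 1) (\<rho> 2) (\<rho> 3) i = \<rho> i"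
  by (auto simp: asg_def)

lemma eval_asg: "e \<in> Sigma390 \<Longrightarrow>
   eval f g \<rho> (fst e) = eval f g (asg (\<rho> 0) (\<rho> 1) (\<rho> 2) (\<rho> 3)) (fst e) \<and>
   eval f g \<rho> (snd e) = eval f g (asg (\<rho> 0) (\<rho> 1) (\<rho> 2) (\<rho> 3)) (snd e)"
proof -
  assume e: "e \<in> Sigma390"
  have A: "\<And>i. i \<in> vs (fst e) \<Longrightarrow> \<rho> i = asg (\<rho> 0) (\<rho> 1) (\<rho> 2) (\<rho> 3) i"
    by (rule asg_agree[symmetric], rule subsetD[OF conjunct1[OF Sigma_vs[OF e]]])
  have B: "\<And>i. i \<in> vs (snd e) \<Longrightarrow> \<rho> i = asg (\<rho> 0) (\<rho> 1) (\<rho> 2) (\<rho> 3) i"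
    by (rule asg_agree[symmetric], rule subsetD[OF conjunct2[OF Sigma_vs[OF e]]])
  show ?thesis using eval_cong[OF A, where f=f and g=g] eval_cong[OF B, where f=f and g=g] by (rule conjI)
qed

lemma S390_ai: "ai_semiring S390 add390 mul390"
  unfolding ai_semiring_def S390_def by code_simp

lemma S390_chk: "\<forall>a\<in>S390. \<forall>b\<in>S390. \<forall>c\<in>S390. \<forall>d\<in>S390. \<forall>e\<in>Sigma390.
   eval add390 mul390 (asg a b c d) (fst e) = eval add390 mul390 (asg a b c d) (snd e)"
  unfolding S390_def Sigma390_def by code_simp

lemma S390_sat: "\<forall>e\<in>Sigma390. sat S390 add390 mul390 e"
  unfolding sat_def
proof (intro ballI allI impI)
  fix e and \<rho> :: "nat \<Rightarrow> nat" assume e: "e \<in> Sigma390" and r: "\<forall>i. \<rho> i \<in> S390"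
  show "eval add390 mul390 \<rho> (fst e) = eval add390 mul390 \<rho> (snd e)"
    using eval_asg[OF e, of add390 mul390 \<rho>] S390_chk r e by metis
qed

lemma e1: "eval add390 mul390 (\<lambda>i. if i = x then 1 else 2) t = (if x \<in> vs t then 1 else 2)"
  by (induct t) (auto simp: add390_def mul390_def)

lemma e3: "eval add390 mul390 (\<lambda>i. if i = x then 3 else 2) t =
   (if x \<in> lg t then 1 else if x \<in> vs t then 3 else 2)"
proof (induct t)
  case (V i) then show ?case by simp
next
  case (Pl a b)
  have h: "x \<in> lg a \<Longrightarrow> x \<in> vs a" "x \<in> lg b \<Longrightarrow> x \<in> vs b" using lg_vs by blast+
  show ?case unfolding eval.simps Pl vs.simps lg.simps
    using h by (cases "x \<in> lg a"; cases "x \<in> vs a"; cases "x \<in> lg b"; cases "x \<in> vs b"; simp add: add390_def)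
next
  case (Ml a b)
  have h: "x \<in> lg a \<Longrightarrow> x \<in> vs a" "x \<in> lg b \<Longrightarrow> x \<in> vs b" using lg_vs by blast+
  show ?case unfolding eval.simps Ml vs.simps lg.simps
    using h by (cases "x \<in> lg a"; cases "x \<in> vs a"; cases "x \<in> lg b"; cases "x \<in> vs b"; simp add: mul390_def)
qed

lemma e4: "eval add390 mul390 (\<lambda>i. if i = x then 4 else 2) t =
   (if x \<in> bd t then 1 else if x \<in> vs t then 4 else 2)"
proof (induct t)
  case (V i) then show ?case by simp
next
  case (Pl a b)
  have h: "x \<in> bd a \<Longrightarrow> x \<in> vs a" "x \<in> bd b \<Longrightarrow> x \<in> vs b" using bd_vs by blast+
  show ?case unfolding eval.simps Pl vs.simps bd.simps
    using h by (cases "x \<in> bd a"; cases "x \<in> vs a"; cases "x \<in> bd b"; cases "x \<in> vs b"; simp add: add390_def)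
next
  case (Ml a b)
  have h: "x \<in> bd a \<Longrightarrow> x \<in> vs a" "x \<in> bd b \<Longrightarrow> x \<in> vs b" using bd_vs by blast+
  show ?case unfolding eval.simps Ml vs.simps bd.simps
    using h by (cases "x \<in> bd a"; cases "x \<in> vs a"; cases "x \<in> bd b"; cases "x \<in> vs b"; simp add: mul390_def)
qed

lemma S390_inv:
  assumes "sat S390 add390 mul390 (u, v)"
  shows "vs u = vs v \<and> lg u = lg v \<and> bd u = bd v"
proof -
  have H: "\<And>\<rho>. (\<forall>i. \<rho> i \<in> S390) \<Longrightarrow> eval add390 mul390 \<rho> u = eval add390 mul390 \<rho> v"
    using assms unfolding sat_def by auto
  have "x \<in> vs u \<longleftrightarrow> x \<in> vs v" for x
  proof -
    have "\<forall>i. (\<lambda>i. if i = x then 1 else 2) i \<in> S390" by (simp add: S390_def)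
    from H[OF this] have "(if x \<in> vs u then 1 else 2::nat) = (if x \<in> vs v then 1 else 2)" by (simp only: e1)
    then show ?thesis by (cases "x \<in> vs u"; cases "x \<in> vs v"; simp split: if_splits)
  qed
  moreover have "x \<in> lg u \<longleftrightarrow> x \<in> lg v" for x
  proof -
    have "\<forall>i. (\<lambda>i. if i = x then 3 else 2) i \<in> S390" by (simp add: S390_def)
    from H[OF this] have "(if x \<in> lg u then 1 else if x \<in> vs u then 3 else 2::nat) = (if x \<in> lg v then 1 else if x \<in> vs v then 3 else 2)" by (simp only: e3)
    then show ?thesis by (cases "x \<in> vs u"; cases "x \<in> vs v"; simp split: if_splits)
  qed
  moreover have "x \<in> bd u \<longleftrightarrow> x \<in> bd v" for x
  proof -
    have "\<forall>i. (\<lambda>i. if i = x then 4 else 2) i \<in> S390" by (simp add: S390_def)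
    from H[OF this] have "(if x \<in> bd u then 1 else if x \<in> vs u then 4 else 2::nat) = (if x \<in> bd v then 1 else if x \<in> vs v then 4 else 2)" by (simp only: e4)
    then show ?thesis by (cases "x \<in> vs u"; cases "x \<in> vs v"; simp split: if_splits)
  qed
  ultimately show ?thesis by blast
qed


section \<open>Models of Sigma390\<close>

fun P :: "('a \<Rightarrow> 'a \<Rightarrow> 'a) \<Rightarrow> (nat \<Rightarrow> 'a) \<Rightarrow> nat list \<Rightarrow> 'a" where
  "P mu r [] = r 0"
| "P mu r [x] = mu (r x) (r x)"
| "P mu r (x # y # ys) = mu (mu (r x) (r x)) (P mu r (y # ys))"

definition PS :: "('a \<Rightarrow> 'a \<Rightarrow> 'a) \<Rightarrow> (nat \<Rightarrow> 'a) \<Rightarrow> nat set \<Rightarrow> 'a" where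
  "PS mu r T = P mu r (sorted_list_of_set T)"

definition preS :: "('a \<Rightarrow> 'a \<Rightarrow> 'a) \<Rightarrow> (nat \<Rightarrow> 'a) \<Rightarrow> nat set \<Rightarrow> 'a \<Rightarrow> 'a" where
  "preS mu r T c = (if T = {} then c else mu (PS mu r T) c)"

locale MM =
  fixes A :: "'a set" and ad mu :: "'a \<Rightarrow> 'a \<Rightarrow> 'a" and r :: "nat \<Rightarrow> 'a"
  assumes ai: "ai_semiring A ad mu" and sg: "\<forall>e\<in>Sigma390. sat A ad mu e" and rA: "\<And>i. r i \<in> A"
begin

lemma clA: "x \<in> A \<Longrightarrow> y \<in> A \<Longrightarrow> ad x y \<in> A" using ai unfolding ai_semiring_def by blast
lemma clM: "x \<in> A \<Longrightarrow> y \<in> A \<Longrightarrow> mu x y \<in> A" using ai unfolding ai_semiring_def by blast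
lemma aA: "x \<in> A \<Longrightarrow> y \<in> A \<Longrightarrow> z \<in> A \<Longrightarrow> ad (ad x y) z = ad x (ad y z)" using ai unfolding ai_semiring_def by blast
lemma cA: "x \<in> A \<Longrightarrow> y \<in> A \<Longrightarrow> ad x y = ad y x" using ai unfolding ai_semiring_def by blast
lemma iA: "x \<in> A \<Longrightarrow> ad x x = x" using ai unfolding ai_semiring_def by blast
lemma aM: "x \<in> A \<Longrightarrow> y \<in> A \<Longrightarrow> z \<in> A \<Longrightarrow> mu (mu x y) z = mu x (mu y z)" using ai unfolding ai_semiring_def by blast
lemma dL: "x \<in> A \<Longrightarrow> y \<in> A \<Longrightarrow> z \<in> A \<Longrightarrow> mu x (ad y z) = ad (mu x y) (mu x z)" using ai unfolding ai_semiring_def by blast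
lemma dR: "x \<in> A \<Longrightarrow> y \<in> A \<Longrightarrow> z \<in> A \<Longrightarrow> mu (ad y z) x = ad (mu y x) (mu z x)" using ai unfolding ai_semiring_def by blast

lemma sgI: assumes "e \<in> Sigma390" "a \<in> A" "b \<in> A" "c \<in> A" "d \<in> A"
  shows "eval ad mu (asg a b c d) (fst e) = eval ad mu (asg a b c d) (snd e)"
proof -
  have "\<forall>i. asg a b c d i \<in> A" using assms by (simp add: asg_def)
  then show ?thesis using sg assms(1) unfolding sat_def by blast
qed

lemma s1: "a \<in> A \<Longrightarrow> b \<in> A \<Longrightarrow> mu (mu a a) b = mu a b"
  using sgI[of "(Ml (sq vx) vy, Ml vx vy)" a b a a] by (simp add: Sigma390_def asg_def)
lemma s3: "a \<in> A \<Longrightarrow> b \<in> A \<Longrightarrow> mu (mu a a) (mu b b) = mu (mu a b) (mu a b)"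
  using sgI[of "(Ml (sq vx) (sq vy), sq (Ml vx vy))" a b a a] by (simp add: Sigma390_def asg_def)
lemma s4: "a \<in> A \<Longrightarrow> b \<in> A \<Longrightarrow> mu (mu a a) (mu b b) = mu (mu b b) (mu a a)"
  using sgI[of "(Ml (sq vx) (sq vy), Ml (sq vy) (sq vx))" a b a a] by (simp add: Sigma390_def asg_def)
lemma s6: "a \<in> A \<Longrightarrow> b \<in> A \<Longrightarrow> ad (mu a b) b = mu a b"
  using sgI[of "(Ml vx vy, Pl (Ml vx vy) vy)" a b a a] by (simp add: Sigma390_def asg_def)
lemma s7: "a \<in> A \<Longrightarrow> b \<in> A \<Longrightarrow> ad (mu a b) a = mu a b"
  using sgI[of "(Ml vy vz, Pl (Ml vy vz) vy)" a a b a] by (simp add: Sigma390_def asg_def)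
lemma s8: "a \<in> A \<Longrightarrow> b \<in> A \<Longrightarrow> c \<in> A \<Longrightarrow> ad (mu a a) (mu b c) = mu (mu (mu a a) b) c"
  using sgI[of "(Pl (sq vx) (Ml vy vz), Ml (Ml (sq vx) vy) vz)" a b c a] by (simp add: Sigma390_def asg_def)

abbreviation lq :: "'a \<Rightarrow> 'a \<Rightarrow> bool" where "lq x y \<equiv> ad x y = y"

lemma lq_refl: "x \<in> A \<Longrightarrow> lq x x" by (rule iA)
lemma lq_trans: "x \<in> A \<Longrightarrow> y \<in> A \<Longrightarrow> z \<in> A \<Longrightarrow> lq x y \<Longrightarrow> lq y z \<Longrightarrow> lq x z"
  by (metis aA)
lemma lq_add: "x \<in> A \<Longrightarrow> y \<in> A \<Longrightarrow> z \<in> A \<Longrightarrow> lq x z \<Longrightarrow> lq y z \<Longrightarrow> lq (ad x y) z"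
  by (metis aA)
lemma lq_addL: "x \<in> A \<Longrightarrow> y \<in> A \<Longrightarrow> lq x (ad x y)"
  by (metis aA iA)
lemma lq_addR: "x \<in> A \<Longrightarrow> y \<in> A \<Longrightarrow> lq y (ad x y)"
  by (metis aA iA cA)
lemma lq_mono: "x \<in> A \<Longrightarrow> y \<in> A \<Longrightarrow> x' \<in> A \<Longrightarrow> y' \<in> A \<Longrightarrow> lq x x' \<Longrightarrow> lq y y' \<Longrightarrow> lq (ad x y) (ad x' y')"
  by (meson clA lq_add lq_addL lq_addR lq_trans)
lemma lq_antisym: "x \<in> A \<Longrightarrow> y \<in> A \<Longrightarrow> lq x y \<Longrightarrow> lq y x \<Longrightarrow> x = y"
  by (metis cA)
lemma lq_mr: "x \<in> A \<Longrightarrow> y \<in> A \<Longrightarrow> lq y (mu x y)"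
  by (metis s6 cA clM)
lemma lq_ml: "x \<in> A \<Longrightarrow> y \<in> A \<Longrightarrow> lq x (mu x y)"
  by (metis s7 cA clM)

lemma ev_in: "eval ad mu r t \<in> A"
  by (induct t) (auto simp: rA clA clM)

lemma sq_idem: "d \<in> A \<Longrightarrow> mu (mu d d) (mu d d) = mu d d"
  by (metis s1 aM clM)

lemma P_cons: "xs \<noteq> [] \<Longrightarrow> P mu r (x # xs) = mu (mu (r x) (r x)) (P mu r xs)"
  by (cases xs) auto

lemma P_in: "xs \<noteq> [] \<Longrightarrow> P mu r xs \<in> A"
proof (induct xs)
  case Nil then show ?case by simp
next
  case (Cons x xs) then show ?case by (cases "xs = []") (auto simp: P_cons clM rA)
qed

lemma P_app: "xs \<noteq> [] \<Longrightarrow> ys \<noteq> [] \<Longrightarrow> P mu r (xs @ ys) = mu (P mu r xs) (P mu r ys)"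
proof (induct xs)
  case Nil then show ?case by simp
next
  case (Cons x xs)
  show ?case
  proof (cases "xs = []")
    case True then show ?thesis using Cons by (simp add: P_cons)
  next
    case False
    then show ?thesis using Cons by (simp add: P_cons aM clM rA P_in)
  qed
qed

lemma P_sq: "xs \<noteq> [] \<Longrightarrow> \<exists>d\<in>A. P mu r xs = mu d d"
proof (induct xs)
  case Nil then show ?case by simp
next
  case (Cons x xs)
  show ?case
  proof (cases "xs = []")
    case True then show ?thesis using rA by auto
  next
    case False
    then obtain d where d: "d \<in> A" "P mu r xs = mu d d" using Cons by blast
    then have "P mu r (x # xs) = mu (mu (r x) d) (mu (r x) d)" using False by (simp add: P_cons s3 rA)
    then show ?thesis using d rA clM by blast
  qed
qed

lemma P_comm: "xs \<noteq> [] \<Longrightarrow> ys \<noteq> [] \<Longrightarrow> mu (P mu r xs) (P mu r ys) = mu (P mu r ys) (P mu r xs)"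
  using P_sq[of xs] P_sq[of ys] s4 by auto

lemma P_abs1: "x \<in> set ys \<Longrightarrow> mu (mu (r x) (r x)) (P mu r ys) = P mu r ys"
proof (induct ys)
  case Nil then show ?case by simp
next
  case (Cons y ys)
  show ?case
  proof (cases "ys = []")
    case True then show ?thesis using Cons by (simp add: sq_idem rA)
  next
    case False
    note PI = P_in[OF False]
    show ?thesis
    proof (cases "x = y")
      case True
      have "mu (mu (r y) (r y)) (mu (mu (r y) (r y)) (P mu r ys)) = mu (mu (r y) (r y)) (P mu r ys)"
        by (metis aM clM rA sq_idem PI)
      then show ?thesis using True False by (simp add: P_cons)
    next
      case ne: False
      then have xi: "x \<in> set ys" using Cons by simp
      have "mu (mu (r x) (r x)) (P mu r (y # ys)) = mu (mu (mu (r x) (r x)) (mu (r y) (r y))) (P mu r ys)"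
        using False PI by (simp add: P_cons aM rA clM)
      also have "\<dots> = mu (mu (mu (r y) (r y)) (mu (r x) (r x))) (P mu r ys)" using s4 rA by simp
      also have "\<dots> = mu (mu (r y) (r y)) (mu (mu (r x) (r x)) (P mu r ys))" using PI by (simp add: aM rA clM)
      also have "\<dots> = P mu r (y # ys)" using Cons(1)[OF xi] False by (simp add: P_cons)
      finally show ?thesis .
    qed
  qed
qed

lemma P_sub: "set xs \<subseteq> set ys \<Longrightarrow> xs \<noteq> [] \<Longrightarrow> ys \<noteq> [] \<Longrightarrow> mu (P mu r xs) (P mu r ys) = P mu r ys"
proof (induct xs)
  case Nil then show ?case by simp
next
  case (Cons x xs)
  show ?case
  proof (cases "xs = []")
    case True then show ?thesis using Cons P_abs1 by simp
  next
    case False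
    then show ?thesis using Cons P_abs1[of x ys]
      by (simp add: P_cons aM rA clM P_in)
  qed
qed

lemma P_set: "set xs = set ys \<Longrightarrow> xs \<noteq> [] \<Longrightarrow> ys \<noteq> [] \<Longrightarrow> P mu r xs = P mu r ys"
  by (metis P_comm P_sub order_refl)

lemma sl: "finite T \<Longrightarrow> T \<noteq> {} \<Longrightarrow> sorted_list_of_set T \<noteq> [] \<and> set (sorted_list_of_set T) = T"
  by simp

lemma PS_in: "finite T \<Longrightarrow> T \<noteq> {} \<Longrightarrow> PS mu r T \<in> A"
  unfolding PS_def using sl P_in by blast

lemma PS_un: assumes "finite T1" "finite T2" "T1 \<noteq> {}" "T2 \<noteq> {}"
  shows "PS mu r (T1 \<union> T2) = mu (PS mu r T1) (PS mu r T2)"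
proof -
  have "PS mu r (T1 \<union> T2) = P mu r (sorted_list_of_set T1 @ sorted_list_of_set T2)"
    unfolding PS_def using assms by (intro P_set) auto
  then show ?thesis unfolding PS_def using assms by (simp add: P_app)
qed

lemma PS_sing: "PS mu r {i} = mu (r i) (r i)"
  unfolding PS_def by simp

lemma PS_sq: "finite T \<Longrightarrow> T \<noteq> {} \<Longrightarrow> \<exists>d\<in>A. PS mu r T = mu d d"
  unfolding PS_def using sl P_sq by blast

lemma PS_idem: "finite T \<Longrightarrow> T \<noteq> {} \<Longrightarrow> mu (PS mu r T) (PS mu r T) = PS mu r T"
  using PS_un[of T T] by simp

lemma PS_abs: assumes "finite T" "x \<in> T" shows "mu (PS mu r T) (r x) = PS mu r T"
proof (cases "T = {x}")
  case True then show ?thesis by (simp add: PS_sing s1 rA)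
next
  case False
  then have T: "T = (T - {x}) \<union> {x}" "T - {x} \<noteq> {}" using assms by auto
  have "PS mu r T = mu (PS mu r (T - {x})) (mu (r x) (r x))"
    using PS_un[of "T - {x}" "{x}"] T assms by (simp add: PS_sing)
  moreover have "mu (r x) (mu (r x) (r x)) = mu (r x) (r x)" by (metis aM s1 rA)
  ultimately show ?thesis using T assms by (simp add: aM rA clM PS_in)
qed

lemma M2: assumes "finite T1" "finite T2" "T1 \<noteq> {}" "T2 \<noteq> {}"
  shows "ad (PS mu r T1) (PS mu r T2) = PS mu r (T1 \<union> T2)"
proof -
  obtain d where d: "d \<in> A" "PS mu r T2 = mu d d" using PS_sq assms by blast
  have p: "PS mu r T1 \<in> A" using PS_in assms by blast
  have "ad (mu (PS mu r T1) (PS mu r T1)) (mu d d) = mu (mu (mu (PS mu r T1) (PS mu r T1)) d) d"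
    using s8 p d by blast
  then show ?thesis using PS_idem assms p d PS_un[OF assms] by (simp add: aM)
qed

lemma M3: assumes "finite T1" "finite T2" "T1 \<noteq> {}" "T2 \<noteq> {}" "c \<in> A"
  shows "ad (PS mu r T2) (mu (PS mu r T1) c) = mu (PS mu r (T1 \<union> T2)) c"
proof -
  have p: "PS mu r T1 \<in> A" "PS mu r T2 \<in> A" using PS_in assms by blast+
  have "ad (mu (PS mu r T2) (PS mu r T2)) (mu (PS mu r T1) c) = mu (mu (mu (PS mu r T2) (PS mu r T2)) (PS mu r T1)) c"
    using s8 p assms by blast
  then show ?thesis using PS_idem assms p PS_un[of T2 T1] by (simp add: Un_commute)
qed

lemma preS_in: "finite T \<Longrightarrow> c \<in> A \<Longrightarrow> preS mu r T c \<in> A"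
  unfolding preS_def using PS_in clM by auto

lemma preS_add: "finite T \<Longrightarrow> x \<in> A \<Longrightarrow> y \<in> A \<Longrightarrow> preS mu r T (ad x y) = ad (preS mu r T x) (preS mu r T y)"
  unfolding preS_def using PS_in dL by auto

lemma PRE_V: assumes "finite S" "c \<in> A"
  shows "preS mu r S (mu (r i) c) = preS mu r (insert i S) c"
proof (cases "S = {}")
  case True then show ?thesis unfolding preS_def using assms by (simp add: PS_sing s1 rA)
next
  case False
  have "preS mu r S (mu (r i) c) = mu (PS mu r S) (mu (mu (r i) (r i)) c)"
    unfolding preS_def using False assms by (simp add: s1 rA)
  also have "\<dots> = mu (PS mu r (S \<union> {i})) c"
    using PS_un[of S "{i}"] False assms by (simp add: PS_sing aM rA clM PS_in)
  finally show ?thesis unfolding preS_def by simp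
qed

lemma MON: assumes "finite T" "S \<subseteq> T" "c \<in> A"
  shows "lq (preS mu r S c) (preS mu r T c)"
proof (cases "S = {}")
  case True
  then show ?thesis unfolding preS_def using assms
    by (auto simp: lq_refl intro: lq_mr PS_in)
next
  case False
  then have fS: "finite S" "T \<noteq> {}" using assms finite_subset by auto
  have "mu (PS mu r T) c = mu (PS mu r (T \<union> S)) c" using assms by (simp add: Un_absorb2)
  also have "\<dots> = mu (PS mu r T) (mu (PS mu r S) c)"
    using PS_un[of T S] fS False assms by (simp add: aM PS_in)
  finally show ?thesis unfolding preS_def using False fS assms
    by (simp add: lq_mr PS_in clM)
qed

end


context MM begin

abbreviation ev :: "trm \<Rightarrow> 'a" where "ev t \<equiv> eval ad mu r t"

lemma ev_Ml: "ev (Ml a b) = mu (ev a) (ev b)" by simp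

lemma ev_MlPl: "ev (Ml (Pl a b) t) = ad (ev (Ml a t)) (ev (Ml b t))"
  by (simp add: dR ev_in)

lemma ev_MlMl: "ev (Ml (Ml a b) t) = ev (Ml a (Ml b t))"
  by (simp add: aM ev_in)

lemma LV: "finite S \<Longrightarrow> X \<in> A \<Longrightarrow> (\<forall>x\<in>lin t. lq (preS mu r S (r x)) X) \<Longrightarrow>
   (\<forall>x\<in>ll t. lq (preS mu r (S \<union> bd t) (r x)) X) \<Longrightarrow> lq (preS mu r S (ev t)) X"
proof (induction t arbitrary: S rule: trm_ind)
  case (1 i) then show ?case by simp
next
  case (2 a b)
  have fa: "finite (S \<union> bd a \<union> bd b)" using 2 fin_bd by auto
  have ha: "lq (preS mu r S (ev a)) X"
  proof (rule "2.IH"(1))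
    show "\<forall>x\<in>ll a. lq (preS mu r (S \<union> bd a) (r x)) X"
    proof
      fix x assume x: "x \<in> ll a"
      have "lq (preS mu r (S \<union> bd a) (r x)) (preS mu r (S \<union> bd (Pl a b)) (r x))"
        using fa by (intro MON) (auto simp: rA)
      moreover have "lq (preS mu r (S \<union> bd (Pl a b)) (r x)) X" using "2.prems"(4) x by simp
      ultimately show "lq (preS mu r (S \<union> bd a) (r x)) X"
        using lq_trans preS_in fa rA "2.prems"(2) fin_bd "2.prems"(1) by (meson finite_Un)
    qed
  qed (use 2 in auto)
  have hb: "lq (preS mu r S (ev b)) X"
  proof (rule "2.IH"(2))
    show "\<forall>x\<in>ll b. lq (preS mu r (S \<union> bd b) (r x)) X"
    proof
      fix x assume x: "x \<in> ll b"
      have "lq (preS mu r (S \<union> bd b) (r x)) (preS mu r (S \<union> bd (Pl a b)) (r x))"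
        using fa by (intro MON) (auto simp: rA)
      moreover have "lq (preS mu r (S \<union> bd (Pl a b)) (r x)) X" using "2.prems"(4) x by simp
      ultimately show "lq (preS mu r (S \<union> bd b) (r x)) X"
        using lq_trans preS_in fa rA "2.prems"(2) fin_bd "2.prems"(1) by (meson finite_Un)
    qed
  qed (use 2 in auto)
  show ?case using ha hb "2.prems" by (simp add: preS_add ev_in lq_add preS_in)
next
  case (3 i t)
  have e: "preS mu r S (ev (Ml (V i) t)) = preS mu r (insert i S) (ev t)"
    using "3.prems"(1) by (simp add: PRE_V ev_in)
  have f: "finite (S \<union> bd (Ml (V i) t))" using "3.prems"(1) fin_bd by simp
  have "lq (preS mu r (insert i S) (ev t)) X"
  proof (rule "3.IH")
    show "\<forall>x\<in>lin t. lq (preS mu r (insert i S) (r x)) X"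
    proof
      fix x assume x: "x \<in> lin t"
      then have "x \<in> ll (Ml (V i) t)" using lin_sub by auto
      then have "lq (preS mu r (S \<union> bd (Ml (V i) t)) (r x)) X" using "3.prems"(4) by blast
      moreover have "lq (preS mu r (insert i S) (r x)) (preS mu r (S \<union> bd (Ml (V i) t)) (r x))"
        using f by (intro MON) (auto simp: rA)
      ultimately show "lq (preS mu r (insert i S) (r x)) X"
        using lq_trans preS_in f rA "3.prems" by (meson finite_insert)
    qed
    show "\<forall>x\<in>ll t. lq (preS mu r (insert i S \<union> bd t) (r x)) X"
    proof
      fix x assume x: "x \<in> ll t"
      then have "x \<in> ll (Ml (V i) t)" using ll_sub by auto
      then have "lq (preS mu r (S \<union> bd (Ml (V i) t)) (r x)) X" using "3.prems"(4) by blast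
      moreover have "S \<union> bd (Ml (V i) t) = insert i S \<union> bd t" by auto
      ultimately show "lq (preS mu r (insert i S \<union> bd t) (r x)) X" by simp
    qed
  qed (use 3 in auto)
  then show ?case using e by simp
next
  case (4 a b t)
  have f: "finite (S \<union> bd (Ml (Pl a b) t))" using "4.prems"(1) fin_bd fin_vs by simp
  have G: "lq (preS mu r S (ev (Ml c t))) X" if c: "vs c \<subseteq> vs (Pl a b)"
    and IH: "\<And>S. finite S \<Longrightarrow> X \<in> A \<Longrightarrow> \<forall>x\<in>lin (Ml c t). lq (preS mu r S (r x)) X \<Longrightarrow>
       \<forall>x\<in>ll (Ml c t). lq (preS mu r (S \<union> bd (Ml c t)) (r x)) X \<Longrightarrow> lq (preS mu r S (ev (Ml c t))) X" for c
  proof (rule IH)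
    show "\<forall>x\<in>ll (Ml c t). lq (preS mu r (S \<union> bd (Ml c t)) (r x)) X"
    proof
      fix x assume x: "x \<in> ll (Ml c t)"
      then have "x \<in> ll (Ml (Pl a b) t)" by simp
      then have "lq (preS mu r (S \<union> bd (Ml (Pl a b) t)) (r x)) X" using "4.prems"(4) by blast
      moreover have "lq (preS mu r (S \<union> bd (Ml c t)) (r x)) (preS mu r (S \<union> bd (Ml (Pl a b) t)) (r x))"
        using f c by (intro MON) (auto simp: rA)
      moreover have "finite (S \<union> bd (Ml c t))" using "4.prems"(1) fin_bd fin_vs by simp
      ultimately show "lq (preS mu r (S \<union> bd (Ml c t)) (r x)) X"
        using lq_trans preS_in f rA "4.prems" by meson
    qed
  qed (use 4 in auto)
  have ha: "lq (preS mu r S (ev (Ml a t))) X" by (rule G) (use "4.IH"(1) in auto)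
  have hb: "lq (preS mu r S (ev (Ml b t))) X" by (rule G) (use "4.IH"(2) in auto)
  show ?case unfolding ev_MlPl using ha hb "4.prems" by (simp add: preS_add ev_in lq_add preS_in clM)
next
  case (5 a b t)
  have "bd (Ml a (Ml b t)) = bd (Ml (Ml a b) t)" by auto
  then have "lq (preS mu r S (ev (Ml a (Ml b t)))) X"
    using "5.prems" by (intro "5.IH") auto
  then show ?case by (simp only: ev_MlMl)
qed

lemma U1: "i \<in> vs u \<Longrightarrow> lq (r i) (ev u)"
proof (induct u)
  case (V x) then show ?case by (simp add: lq_refl rA)
next
  case (Pl a b) then show ?case
    by (auto intro: lq_trans[OF rA ev_in _ _ lq_addL] lq_trans[OF rA ev_in _ _ lq_addR] simp: ev_in clA)
next
  case (Ml a b) then show ?case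
    by (auto intro: lq_trans[OF rA ev_in _ _ lq_ml] lq_trans[OF rA ev_in _ _ lq_mr] simp: ev_in clM)
qed

lemma COMB2: assumes "finite T1" "finite T2" "T1 \<noteq> {}" "p \<in> A" "q \<in> A"
  "lq (PS mu r T1) p" "T2 \<noteq> {} \<Longrightarrow> lq (PS mu r T2) q"
  shows "lq (PS mu r (T1 \<union> T2)) (ad p q)"
proof (cases "T2 = {}")
  case True then show ?thesis using assms lq_trans[OF PS_in _ clA _ lq_addL] by auto
next
  case False
  then have "lq (ad (PS mu r T1) (PS mu r T2)) (ad p q)" using assms by (intro lq_mono) (auto simp: PS_in)
  then show ?thesis using M2 assms False by simp
qed

lemma COMB3: assumes "finite T1" "finite T2" "T1 \<noteq> {}" "p \<in> A" "q \<in> A" "c \<in> A"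
  "lq (mu (PS mu r T1) c) p" "T2 \<noteq> {} \<Longrightarrow> lq (PS mu r T2) q"
  shows "lq (mu (PS mu r (T1 \<union> T2)) c) (ad p q)"
proof (cases "T2 = {}")
  case True then show ?thesis using assms lq_trans[OF clM[OF PS_in] _ clA _ lq_addL] by auto
next
  case False
  then have "lq (ad (PS mu r T2) (mu (PS mu r T1) c)) (ad q p)" using assms by (intro lq_mono) (auto simp: PS_in clM)
  then show ?thesis using M3 assms False cA by simp
qed

lemma U2: "finite S \<Longrightarrow> S \<noteq> {} \<or> bd u \<noteq> {} \<Longrightarrow> lq (PS mu r (S \<union> bd u)) (preS mu r S (ev u))"
proof (induction u arbitrary: S rule: trm_ind)
  case (1 i) then show ?case by (simp add: preS_def lq_ml PS_in rA)
next
  case (2 a b)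
  have fin: "finite (S \<union> bd a)" "finite (S \<union> bd b)" using "2.prems"(1) fin_bd by auto
  have ins: "preS mu r S (ev a) \<in> A" "preS mu r S (ev b) \<in> A" using "2.prems"(1) by (auto simp: preS_in ev_in)
  have e: "preS mu r S (ev (Pl a b)) = ad (preS mu r S (ev a)) (preS mu r S (ev b))"
    using "2.prems"(1) by (simp add: preS_add ev_in)
  show ?case
  proof (cases "S \<union> bd a = {}")
    case True
    have nb: "S \<noteq> {} \<or> bd b \<noteq> {}" using "2.prems"(2) True by auto
    have hb: "lq (PS mu r (S \<union> bd b)) (preS mu r S (ev b))" by (rule "2.IH"(2)[OF "2.prems"(1) nb])
    have "lq (PS mu r ((S \<union> bd b) \<union> (S \<union> bd a))) (ad (preS mu r S (ev b)) (preS mu r S (ev a)))"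
      by (rule COMB2[OF fin(2) fin(1) _ ins(2) ins(1) hb]) (use True nb in auto)
    moreover have "(S \<union> bd b) \<union> (S \<union> bd a) = S \<union> bd (Pl a b)" by auto
    moreover have "ad (preS mu r S (ev b)) (preS mu r S (ev a)) = ad (preS mu r S (ev a)) (preS mu r S (ev b))"
      using ins cA by blast
    ultimately show ?thesis using e by simp
  next
    case False
    have na: "S \<noteq> {} \<or> bd a \<noteq> {}" using False by auto
    have ha: "lq (PS mu r (S \<union> bd a)) (preS mu r S (ev a))" by (rule "2.IH"(1)[OF "2.prems"(1) na])
    have hb: "S \<union> bd b \<noteq> {} \<Longrightarrow> lq (PS mu r (S \<union> bd b)) (preS mu r S (ev b))"
      by (rule "2.IH"(2)[OF "2.prems"(1)]) auto
    have "lq (PS mu r ((S \<union> bd a) \<union> (S \<union> bd b))) (ad (preS mu r S (ev a)) (preS mu r S (ev b)))"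
      by (rule COMB2[OF fin(1) fin(2) False ins(1) ins(2) ha hb])
    moreover have "(S \<union> bd a) \<union> (S \<union> bd b) = S \<union> bd (Pl a b)" by auto
    ultimately show ?thesis using e by simp
  qed
next
  case (3 i t)
  have e: "preS mu r S (ev (Ml (V i) t)) = preS mu r (insert i S) (ev t)"
    using "3.prems"(1) by (simp add: PRE_V ev_in)
  have "lq (PS mu r (insert i S \<union> bd t)) (preS mu r (insert i S) (ev t))"
    by (rule "3.IH") (use "3.prems"(1) in auto)
  moreover have "insert i S \<union> bd t = S \<union> bd (Ml (V i) t)" by auto
  ultimately show ?case using e by simp
next
  case (4 a b t)
  have fin: "finite (S \<union> bd (Ml a t))" "finite (S \<union> bd (Ml b t))" using "4.prems"(1) fin_bd fin_vs by auto
  have ins: "preS mu r S (ev (Ml a t)) \<in> A" "preS mu r S (ev (Ml b t)) \<in> A" using "4.prems"(1) by (auto simp: preS_in ev_in clM)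
  have e: "preS mu r S (ev (Ml (Pl a b) t)) = ad (preS mu r S (ev (Ml a t))) (preS mu r S (ev (Ml b t)))"
    unfolding ev_MlPl using "4.prems"(1) by (rule preS_add) (rule ev_in)+
  have ne: "bd (Ml a t) \<noteq> {}" "bd (Ml b t) \<noteq> {}" using vs_ne by auto
  have ha: "lq (PS mu r (S \<union> bd (Ml a t))) (preS mu r S (ev (Ml a t)))"
    by (rule "4.IH"(1)[OF "4.prems"(1)]) (use ne in blast)
  have hb: "lq (PS mu r (S \<union> bd (Ml b t))) (preS mu r S (ev (Ml b t)))"
    by (rule "4.IH"(2)[OF "4.prems"(1)]) (use ne in blast)
  have "lq (PS mu r ((S \<union> bd (Ml a t)) \<union> (S \<union> bd (Ml b t)))) (ad (preS mu r S (ev (Ml a t))) (preS mu r S (ev (Ml b t))))"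
    by (rule COMB2[OF fin(1) fin(2) _ ins(1) ins(2) ha]) (use ne hb in auto)
  moreover have "(S \<union> bd (Ml a t)) \<union> (S \<union> bd (Ml b t)) = S \<union> bd (Ml (Pl a b) t)" by auto
  ultimately show ?case using e by simp
next
  case (5 a b t)
  have eq: "bd (Ml a (Ml b t)) = bd (Ml (Ml a b) t)" by auto
  have "bd (Ml a (Ml b t)) \<noteq> {}" using vs_ne[of a] by auto
  then have "lq (PS mu r (S \<union> bd (Ml a (Ml b t)))) (preS mu r S (ev (Ml a (Ml b t))))"
    using "5.IH"[OF "5.prems"(1)] by blast
  then show ?case by (simp only: ev_MlMl eq)
qed

lemma U3: "finite S \<Longrightarrow> x \<in> lst u \<Longrightarrow> S \<noteq> {} \<or> x \<in> ll u \<Longrightarrow>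
   lq (mu (PS mu r (S \<union> bd u)) (r x)) (preS mu r S (ev u))"
proof (induction u arbitrary: S rule: trm_ind)
  case (1 i) then show ?case by (simp add: preS_def lq_refl PS_in rA clM)
next
  case (2 a b)
  have fin: "finite (S \<union> bd a)" "finite (S \<union> bd b)" using "2.prems"(1) fin_bd by auto
  have ins: "preS mu r S (ev a) \<in> A" "preS mu r S (ev b) \<in> A" using "2.prems"(1) by (auto simp: preS_in ev_in)
  have e: "preS mu r S (ev (Pl a b)) = ad (preS mu r S (ev a)) (preS mu r S (ev b))"
    using "2.prems"(1) by (simp add: preS_add ev_in)
  have side: "(x \<in> lst a \<and> (S \<noteq> {} \<or> x \<in> ll a)) \<or> (x \<in> lst b \<and> (S \<noteq> {} \<or> x \<in> ll b))"
    using "2.prems"(2,3) ll_sub[of a] ll_sub[of b] by auto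
  then show ?case
  proof
    assume sa: "x \<in> lst a \<and> (S \<noteq> {} \<or> x \<in> ll a)"
    have ne: "S \<union> bd a \<noteq> {}" using sa ll_bd[of a] by auto
    have ha: "lq (mu (PS mu r (S \<union> bd a)) (r x)) (preS mu r S (ev a))"
      using "2.IH"(1)[OF "2.prems"(1)] sa by blast
    have hb: "S \<union> bd b \<noteq> {} \<Longrightarrow> lq (PS mu r (S \<union> bd b)) (preS mu r S (ev b))"
      by (rule U2[OF "2.prems"(1)]) auto
    have "lq (mu (PS mu r ((S \<union> bd a) \<union> (S \<union> bd b))) (r x)) (ad (preS mu r S (ev a)) (preS mu r S (ev b)))"
      by (rule COMB3[OF fin(1) fin(2) ne ins(1) ins(2) rA ha hb])
    moreover have "(S \<union> bd a) \<union> (S \<union> bd b) = S \<union> bd (Pl a b)" by auto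
    ultimately show ?thesis using e by simp
  next
    assume sb: "x \<in> lst b \<and> (S \<noteq> {} \<or> x \<in> ll b)"
    have ne: "S \<union> bd b \<noteq> {}" using sb ll_bd[of b] by auto
    have hb: "lq (mu (PS mu r (S \<union> bd b)) (r x)) (preS mu r S (ev b))"
      using "2.IH"(2)[OF "2.prems"(1)] sb by blast
    have ha: "S \<union> bd a \<noteq> {} \<Longrightarrow> lq (PS mu r (S \<union> bd a)) (preS mu r S (ev a))"
      by (rule U2[OF "2.prems"(1)]) auto
    have "lq (mu (PS mu r ((S \<union> bd b) \<union> (S \<union> bd a))) (r x)) (ad (preS mu r S (ev b)) (preS mu r S (ev a)))"
      by (rule COMB3[OF fin(2) fin(1) ne ins(2) ins(1) rA hb ha])
    moreover have "(S \<union> bd b) \<union> (S \<union> bd a) = S \<union> bd (Pl a b)" by auto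
    moreover have "ad (preS mu r S (ev b)) (preS mu r S (ev a)) = ad (preS mu r S (ev a)) (preS mu r S (ev b))"
      using ins cA by blast
    ultimately show ?thesis using e by simp
  qed
next
  case (3 i t)
  have e: "preS mu r S (ev (Ml (V i) t)) = preS mu r (insert i S) (ev t)"
    using "3.prems"(1) by (simp add: PRE_V ev_in)
  have xt: "x \<in> lst t" using "3.prems"(2) by simp
  have "lq (mu (PS mu r (insert i S \<union> bd t)) (r x)) (preS mu r (insert i S) (ev t))"
    by (rule "3.IH"[OF _ xt]) (use "3.prems"(1) in auto)
  moreover have "insert i S \<union> bd t = S \<union> bd (Ml (V i) t)" by auto
  ultimately show ?case using e by simp
next
  case (4 a b t)
  have fin: "finite (S \<union> bd (Ml a t))" "finite (S \<union> bd (Ml b t))" using "4.prems"(1) fin_bd fin_vs by auto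
  have ins: "preS mu r S (ev (Ml a t)) \<in> A" "preS mu r S (ev (Ml b t)) \<in> A" using "4.prems"(1) by (auto simp: preS_in ev_in clM)
  have e: "preS mu r S (ev (Ml (Pl a b) t)) = ad (preS mu r S (ev (Ml a t))) (preS mu r S (ev (Ml b t)))"
    unfolding ev_MlPl using "4.prems"(1) by (rule preS_add) (rule ev_in)+
  have ne: "S \<union> bd (Ml a t) \<noteq> {}" using vs_ne[of a] by auto
  have xt: "x \<in> lst (Ml a t)" "x \<in> ll (Ml a t)" using "4.prems"(2) by auto
  have ha: "lq (mu (PS mu r (S \<union> bd (Ml a t))) (r x)) (preS mu r S (ev (Ml a t)))"
    using "4.IH"(1)[OF "4.prems"(1) xt(1)] xt(2) by blast
  have hb: "S \<union> bd (Ml b t) \<noteq> {} \<Longrightarrow> lq (PS mu r (S \<union> bd (Ml b t))) (preS mu r S (ev (Ml b t)))"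
    by (rule U2[OF "4.prems"(1)]) auto
  have "lq (mu (PS mu r ((S \<union> bd (Ml a t)) \<union> (S \<union> bd (Ml b t)))) (r x)) (ad (preS mu r S (ev (Ml a t))) (preS mu r S (ev (Ml b t))))"
    by (rule COMB3[OF fin(1) fin(2) ne ins(1) ins(2) rA ha hb])
  moreover have "(S \<union> bd (Ml a t)) \<union> (S \<union> bd (Ml b t)) = S \<union> bd (Ml (Pl a b) t)" by auto
  ultimately show ?case using e by simp
next
  case (5 a b t)
  have eq: "bd (Ml a (Ml b t)) = bd (Ml (Ml a b) t)" by auto
  have xt: "x \<in> lst (Ml a (Ml b t))" "x \<in> ll (Ml a (Ml b t))" using "5.prems"(2) by auto
  have "lq (mu (PS mu r (S \<union> bd (Ml a (Ml b t)))) (r x)) (preS mu r S (ev (Ml a (Ml b t))))"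
    using "5.IH"[OF "5.prems"(1) xt(1)] xt(2) by blast
  then show ?case by (simp only: ev_MlMl eq)
qed

lemma LE: assumes "vs v \<subseteq> vs u" "lg v \<subseteq> lg u" "bd v \<subseteq> bd u"
  shows "lq (ev v) (ev u)"
proof -
  have "lq (preS mu r {} (ev v)) (ev u)"
  proof (rule LV)
    show "\<forall>x\<in>lin v. lq (preS mu r {} (r x)) (ev u)"
      using assms(1) lin_vs by (auto simp: preS_def intro: U1)
    show "\<forall>x\<in>ll v. lq (preS mu r ({} \<union> bd v) (r x)) (ev u)"
    proof
      fix x assume x: "x \<in> ll v"
      have bv: "bd v \<noteq> {}" using ll_bd x by auto
      have bu: "bd u \<noteq> {}" using bv assms(3) by auto
      have xl: "x \<in> lg u" using x ll_lg assms(2) by auto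
      have m: "lq (preS mu r (bd v) (r x)) (preS mu r (bd u) (r x))"
        using assms(3) fin_bd rA by (intro MON) auto
      have k: "lq (preS mu r (bd u) (r x)) (ev u)"
      proof (cases "x \<in> bd u")
        case True
        then have "preS mu r (bd u) (r x) = PS mu r (bd u)" using bu fin_bd PS_abs by (simp add: preS_def)
        then show ?thesis using U2[of "{}" u] bu by (simp add: preS_def)
      next
        case False
        then have "x \<in> ll u" using xl lg_sub by auto
        then show ?thesis using U3[of "{}" x u] ll_sub bu by (auto simp: preS_def)
      qed
      show "lq (preS mu r ({} \<union> bd v) (r x)) (ev u)"
        using lq_trans[OF _ _ ev_in m k] preS_in fin_bd rA by simp
    qed
  qed (auto simp: ev_in)
  then show ?thesis by (simp add: preS_def)
qed

end

theorem proposition6p11: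
  fixes A :: "'a set" and ad mu :: "'a \<Rightarrow> 'a \<Rightarrow> 'a"
  shows "(ai_semiring S390 add390 mul390 \<and> (\<forall>e\<in>Sigma390. sat S390 add390 mul390 e))
       \<and> ((ai_semiring A ad mu \<and> (\<forall>e\<in>Sigma390. sat A ad mu e))
            \<longrightarrow> (\<forall>e. sat S390 add390 mul390 e \<longrightarrow> sat A ad mu e))"
proof (intro conjI impI allI)
  show "ai_semiring S390 add390 mul390" by (rule S390_ai)
  show "\<forall>e\<in>Sigma390. sat S390 add390 mul390 e" by (rule S390_sat)
  fix e assume H: "ai_semiring A ad mu \<and> (\<forall>e\<in>Sigma390. sat A ad mu e)"
    and E: "sat S390 add390 mul390 e"
  obtain u v where uv: "e = (u, v)" by (cases e)
  have inv: "vs u = vs v \<and> lg u = lg v \<and> bd u = bd v" using S390_inv E uv by blast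
  show "sat A ad mu e" unfolding sat_def uv
  proof (intro allI impI)
    fix \<rho> :: "nat \<Rightarrow> 'a" assume R: "\<forall>i. \<rho> i \<in> A"
    interpret MM A ad mu \<rho> using H R by unfold_locales auto
    have "lq (ev u) (ev v)" "lq (ev v) (ev u)" using inv by (auto intro: LE)
    then show "eval ad mu \<rho> (fst (u, v)) = eval ad mu \<rho> (snd (u, v))"
      using lq_antisym ev_in by simp
  qed
qed

end
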